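(* Let $p,q,e$ be positive integers and $\mathbf{C}=\begin{bmatrix}1 & p\\ q & 1+pq\end{bmatrix}$. The least period of the Cat map over $\mathbb{Z}_{2^e}$ is $T$ if and only if $T$ is the minimum positive integer $n$ satisfying $$\tfrac12 G_n\equiv 1 \pmod{2^e}\quad\text{and}\quad H_n\equiv 0\pmod{2^{e-h_e}},$$ where $$h_e=\begin{cases}-1 & \text{if } e_p+e_q=0;\\ \min(e_p,e_q) & \text{if } e>\min(e_p,e_q),\ e_p+e_q\ne 0;\\ e & \text{if } e\le \min(e_p,e_q),\end{cases}$$ $e_p=\max\{x: 2^x\mid p\}$ and $e_q=\max\{x: 2^x\mid q\}$.
   Context: The Cat map over $\mathbb{Z}_{2^e}$ is $v\mapsto \mathbf{C}v\bmod 2^e$ on $\mathbb{Z}_{2^e}^2$; its least period is the least positive integer $n$ with $\mathbf{C}^nv\equiv v\pmod{2^e}$ for all $v$. Put $A=pq+2$, $B=\sqrt{A^2-4}$, $G_n=\left(\frac{A+B}{2}\right)^n+\left(\frac{A-B}{2}\right)^n$, $H_n=\frac{1}{B}\left(\left(\frac{A+B}{2}\right)^n-\left(\frac{A-B}{2}\right)^n\right)$ (integers). The congruence $\frac12 G_n\equiv 1\pmod{2^e}$ is understood to require that $\frac12 G_n$ be an integer. *)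

theory Defs
  imports Complex_Main "HOL-Computational_Algebra.Computational_Algebra" "HOL-Number_Theory.Cong"
begin

definition cat_mat :: "nat \<Rightarrow> nat \<Rightarrow> int \<times> int \<Rightarrow> int \<times> int" where
  "cat_mat p q v = (fst v + int p * snd v, int q * fst v + (1 + int p * int q) * snd v)"

definition cat_fixes :: "nat \<Rightarrow> nat \<Rightarrow> nat \<Rightarrow> nat \<Rightarrow> bool" where
  "cat_fixes p q e n \<longleftrightarrow> (\<forall>x y :: int.
      [fst ((cat_mat p q ^^ n) (x, y)) = x] (mod 2 ^ e) \<and>
      [snd ((cat_mat p q ^^ n) (x, y)) = y] (mod 2 ^ e))"

definition cat_least_period :: "nat \<Rightarrow> nat \<Rightarrow> nat \<Rightarrow> nat \<Rightarrow> bool" where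
  "cat_least_period p q e T \<longleftrightarrow>
     0 < T \<and> cat_fixes p q e T \<and> (\<forall>n. 0 < n \<and> n < T \<longrightarrow> \<not> cat_fixes p q e n)"

definition catA :: "nat \<Rightarrow> nat \<Rightarrow> real" where
  "catA p q = real p * real q + 2"

definition catB :: "nat \<Rightarrow> nat \<Rightarrow> real" where
  "catB p q = sqrt ((catA p q)^2 - 4)"

definition catG :: "nat \<Rightarrow> nat \<Rightarrow> nat \<Rightarrow> real" where
  "catG p q n = ((catA p q + catB p q) / 2) ^ n + ((catA p q - catB p q) / 2) ^ n"

definition catH :: "nat \<Rightarrow> nat \<Rightarrow> nat \<Rightarrow> real" where
  "catH p q n = (((catA p q + catB p q) / 2) ^ n - ((catA p q - catB p q) / 2) ^ n) / catB p q"

definition cat_h :: "nat \<Rightarrow> nat \<Rightarrow> nat \<Rightarrow> int" where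
  "cat_h p q e =
     (let ep = multiplicity (2::nat) p; eq = multiplicity (2::nat) q in
      if ep + eq = 0 then -1
      else if e > min ep eq then int (min ep eq)
      else int e)"

definition cat_cond :: "nat \<Rightarrow> nat \<Rightarrow> nat \<Rightarrow> nat \<Rightarrow> bool" where
  "cat_cond p q e n \<longleftrightarrow>
     (\<exists>k::int. catG p q n / 2 = real_of_int (1 + 2 ^ e * k)) \<and>
     (\<exists>k::int. catH p q n = real_of_int (2 ^ nat (int e - cat_h p q e) * k))"

end

theory Submission
  imports Defs
begin

fun hs :: "int \<Rightarrow> nat \<Rightarrow> int" where
  "hs A 0 = 0"
| "hs A (Suc 0) = 1"
| "hs A (Suc (Suc n)) = A * hs A (Suc n) - hs A n"

lemma hs_cassini:
  "(hs A (Suc k) - hs A k)^2 - (A - 2) * hs A (Suc k) * hs A k = 1"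
proof (induction k)
  case 0
  then show ?case by simp
next
  case (Suc k)
  define a where "a = hs A (Suc k)"
  define b where "b = hs A k"
  have "(A*a - b - a)^2 - (A - 2) * (A*a - b) * a = (a - b)^2 - (A - 2) * a * b"
    by (simp add: power2_eq_square algebra_simps)
  then show ?case using Suc by (simp add: a_def b_def)
qed

lemma mat_pow:
  "(cat_mat p q ^^ Suc k) (x, y) =
     ((hs (int p * int q + 2) (Suc k) - hs (int p * int q + 2) k) * x
        + int p * hs (int p * int q + 2) (Suc k) * y,
      int q * hs (int p * int q + 2) (Suc k) * x
        + ((1 + int p * int q) * hs (int p * int q + 2) (Suc k) - hs (int p * int q + 2) k) * y)"
proof (induction k)
  case 0
  then show ?case by (simp add: cat_mat_def)
next
  case (Suc k)
  have eq: "(cat_mat p q ^^ Suc (Suc k)) (x, y) = cat_mat p q ((cat_mat p q ^^ Suc k) (x, y))"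
    by simp
  show ?case
    unfolding eq Suc by (simp add: cat_mat_def algebra_simps)
qed


lemma pow_rec:
  fixes x A :: real
  assumes "x^2 = A*x - 1"
  shows "x^(Suc (Suc n)) = A * x^(Suc n) - x^n"
proof -
  have "x^(Suc (Suc n)) = x^n * x^2" by (simp add: power2_eq_square algebra_simps)
  also have "\<dots> = x^n * (A*x - 1)" using assms by simp
  also have "\<dots> = A * x^(Suc n) - x^n" by (simp add: algebra_simps)
  finally show ?thesis .
qed

lemma real_facts:
  assumes "0 < p" "0 < q"
  shows "catB p q > 0"
    and "((catA p q + catB p q)/2)^2 = catA p q * ((catA p q + catB p q)/2) - 1"
    and "((catA p q - catB p q)/2)^2 = catA p q * ((catA p q - catB p q)/2) - 1"
proof -
  have "real p \<ge> 1" "real q \<ge> 1" using assms by auto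
  then have "real p * real q \<ge> 1" by (metis mult_mono' mult_1 zero_le_one)
  then have A3: "catA p q \<ge> 3" unfolding catA_def by simp
  then have "catA p q * catA p q \<ge> 3 * 3" by (intro mult_mono) auto
  then have pos: "(catA p q)^2 - 4 > 0" by (simp add: power2_eq_square)
  show "catB p q > 0" unfolding catB_def using pos by simp
  have B2: "(catB p q)^2 = (catA p q)^2 - 4" unfolding catB_def using pos by simp
  show "((catA p q + catB p q)/2)^2 = catA p q * ((catA p q + catB p q)/2) - 1"
    using B2 by (simp add: power2_eq_square field_simps)
  show "((catA p q - catB p q)/2)^2 = catA p q * ((catA p q - catB p q)/2) - 1"
    using B2 by (simp add: power2_eq_square field_simps)
qed

lemma catA_int: "catA p q = real_of_int (int p * int q + 2)"
  unfolding catA_def by simp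

lemma catH_rec:
  assumes "0 < p" "0 < q"
  shows "catH p q (Suc (Suc n)) = catA p q * catH p q (Suc n) - catH p q n"
proof -
  define a where "a = (catA p q + catB p q)/2"
  define b where "b = (catA p q - catB p q)/2"
  have ra: "a^(Suc (Suc n)) = catA p q * a^(Suc n) - a^n"
    using pow_rec real_facts(2)[OF assms] unfolding a_def by blast
  have rb: "b^(Suc (Suc n)) = catA p q * b^(Suc n) - b^n"
    using pow_rec real_facts(3)[OF assms] unfolding b_def by blast
  have num: "a^(Suc (Suc n)) - b^(Suc (Suc n)) = catA p q * (a^(Suc n) - b^(Suc n)) - (a^n - b^n)"
    unfolding ra rb by (simp add: algebra_simps)
  have "catH p q (Suc (Suc n)) = (catA p q * (a^(Suc n) - b^(Suc n)) - (a^n - b^n)) / catB p q"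
    unfolding catH_def a_def[symmetric] b_def[symmetric] num ..
  also have "\<dots> = catA p q * ((a^(Suc n) - b^(Suc n)) / catB p q) - (a^n - b^n) / catB p q"
    by (metis diff_divide_distrib times_divide_eq_right)
  finally show ?thesis unfolding catH_def a_def b_def .
qed

lemma catH_hs:
  assumes "0 < p" "0 < q"
  shows "catH p q n = real_of_int (hs (int p * int q + 2) n)"
proof -
  have "catH p q n = real_of_int (hs (int p * int q + 2) n) \<and>
        catH p q (Suc n) = real_of_int (hs (int p * int q + 2) (Suc n))"
  proof (induction n)
    case 0
    have B: "catB p q \<noteq> 0" using real_facts(1)[OF assms] by simp
    have "catH p q 0 = 0" by (simp add: catH_def)
    moreover have "catH p q (Suc 0) = catB p q / catB p q"
      unfolding catH_def by (simp add: diff_divide_distrib[symmetric])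
    ultimately show ?case using B by simp
  next
    case (Suc n)
    have "catH p q (Suc (Suc n)) = catA p q * catH p q (Suc n) - catH p q n"
      by (rule catH_rec[OF assms])
    also have "\<dots> = real_of_int ((int p * int q + 2) * hs (int p * int q + 2) (Suc n)
                        - hs (int p * int q + 2) n)"
      unfolding catA_int using Suc.IH by (simp only: of_int_diff of_int_mult)
    finally show ?case using Suc.IH by simp
  qed
  then show ?thesis by blast
qed


lemma catG_hs:
  assumes "0 < p" "0 < q"
  shows "catG p q n = real_of_int (2 * hs (int p * int q + 2) (Suc n)
            - (int p * int q + 2) * hs (int p * int q + 2) n)"
proof -
  define a where "a = (catA p q + catB p q)/2"
  define b where "b = (catA p q - catB p q)/2"
  define B where "B = catB p q"
  define A where "A = catA p q"
  have B: "B \<noteq> 0" using real_facts(1)[OF assms] unfolding B_def by simp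
  have H: "catH p q m = (a^m - b^m) / B" for m unfolding catH_def a_def b_def B_def ..
  have G: "catG p q n = a^n + b^n" unfolding catG_def a_def b_def ..
  have ab: "2*a - A = B" "2*b - A = - B" unfolding a_def b_def A_def B_def by (simp_all add: field_simps)
  have "B * (2 * catH p q (Suc n) - A * catH p q n) = 2*(a^Suc n - b^Suc n) - A*(a^n - b^n)"
    unfolding H using B by (simp add: field_simps)
  also have "\<dots> = a^n * (2*a - A) - b^n * (2*b - A)" by (simp add: algebra_simps)
  also have "\<dots> = B * catG p q n" unfolding ab G by (simp add: algebra_simps)
  finally have "catG p q n = 2 * catH p q (Suc n) - A * catH p q n" using B by simp
  then show ?thesis using catH_hs[OF assms] unfolding A_def catA_int by simp
qed


lemma odd_cancel:
  fixes u a :: int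
  assumes "odd u" "2^k dvd u*a"
  shows "2^k dvd a"
proof -
  have "coprime ((2::int)^k) u" using assms(1) by (simp add: coprime_left_2_iff_odd)
  then show ?thesis using assms(2) by (simp add: coprime_dvd_mult_right_iff)
qed

lemma dvd2: "(2::int)^(e+1) dvd 2*s \<longleftrightarrow> 2^e dvd s"
  by simp

lemma core1:
  fixes a b P' Q' :: int and e :: nat
  assumes "odd P'" "odd Q'" "0 < e"
    and cas: "(a - b)^2 - P'*Q'*a*b = 1"
  shows "((2::int)^e dvd (a-b-1) \<and> 2^e dvd P'*a \<and> 2^e dvd Q'*a) \<longleftrightarrow>
         (2^(e+1) dvd (P'*Q'*a + 2*(a-b-1)) \<and> 2^(e+1) dvd a)"
proof
  assume H: "2^e dvd (a-b-1) \<and> 2^e dvd P'*a \<and> 2^e dvd Q'*a"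
  then have "2^e dvd a" using odd_cancel assms(1) by blast
  then obtain u where u: "a = 2^e * u" by blast
  obtain t where t: "a - b - 1 = 2^e * t" using H by blast
  have b: "b = 2^e*(u - t) - 1" using u t by (simp add: algebra_simps)
  have c2: "(a-b-1)*((a-b-1)+2) = P'*Q'*a*b" using cas by (simp add: power2_eq_square algebra_simps)
  have "(2^e*t)*((2^e*t)+2) = P'*Q'*(2^e*u)*b" using c2 t u by metis
  then have "2^e * (t * (2^e*t + 2)) = 2^e * (P'*Q'*u*b)" by (simp add: algebra_simps)
  then have eq: "t * (2^e*t + 2) = P'*Q'*u*b" by simp
  have "even ((2::int)^e)" using assms(3) by simp
  then have "even (t * (2^e*t + 2))" by simp
  then have "even (P'*Q'*u*b)" using eq by simp
  moreover have "odd b" unfolding b using assms(3) by simp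
  ultimately have "even u" using assms(1,2) by simp
  then obtain w where w: "u = 2*w" by blast
  have a: "a = 2^(e+1) * w" using u w by simp
  have "P'*Q'*a + 2*(a-b-1) = 2^(e+1) * (P'*Q'*w + t)" unfolding t using a by (simp add: algebra_simps)
  then show "2^(e+1) dvd (P'*Q'*a + 2*(a-b-1)) \<and> 2^(e+1) dvd a" using a by simp
next
  assume H: "2^(e+1) dvd (P'*Q'*a + 2*(a-b-1)) \<and> 2^(e+1) dvd a"
  then obtain w where a: "a = 2^(e+1) * w" by blast
  have "2^(e+1) dvd P'*Q'*a" using a by simp
  then have "2^(e+1) dvd 2*(a-b-1)" using H by (simp add: dvd_add_right_iff)
  then have "2^e dvd (a-b-1)" using dvd2 by blast
  moreover have "2^e dvd a" using a by (simp add: power_Suc)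
  ultimately show "2^e dvd (a-b-1) \<and> 2^e dvd P'*a \<and> 2^e dvd Q'*a" by simp
qed


lemma core2:
  fixes a s P' Q' :: int and e ep eq :: nat
  assumes "odd P'" "odd Q'" "0 < ep + eq" "min ep eq < e"
  shows "((2::int)^e dvd s \<and> 2^e dvd (2^ep*P')*a \<and> 2^e dvd (2^eq*Q')*a) \<longleftrightarrow>
         (2^(e+1) dvd ((2^ep*P')*(2^eq*Q')*a + 2*s) \<and> 2^(e - min ep eq) dvd a)"
proof -
  define m where "m = min ep eq"
  have K: "2^(e+1) dvd (2^ep*P')*(2^eq*Q')*a" if A: "(2::int)^(e - m) dvd a" for a :: int
  proof -
    obtain w where w: "a = 2^(e-m) * w" using A by blast
    have "(2^ep*P')*(2^eq*Q')*a = 2^(ep+eq+(e-m)) * (P'*Q'*w)"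
      unfolding w by (simp add: power_add algebra_simps)
    moreover have "(2::int)^(e+1) dvd 2^(ep+eq+(e-m))"
      by (rule le_imp_power_dvd) (use assms in \<open>auto simp: m_def\<close>)
    ultimately show ?thesis by (metis dvd_mult2)
  qed
  show ?thesis unfolding m_def[symmetric]
  proof
    assume H: "2^e dvd s \<and> 2^e dvd (2^ep*P')*a \<and> 2^e dvd (2^eq*Q')*a"
    have "2^(e-m) dvd a"
    proof (cases "ep \<le> eq")
      case True
      then have m: "m = ep" by (simp add: m_def)
      have "(2::int)^e = 2^ep * 2^(e-ep)" using assms(4) True by (simp add: power_add[symmetric])
      then have "2^ep * 2^(e-ep) dvd 2^ep * (P'*a)" using H by (simp add: mult.assoc)
      then have "2^(e-ep) dvd P'*a" by simp
      then show ?thesis using odd_cancel assms(1) m by blast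
    next
      case False
      then have m: "m = eq" by (simp add: m_def)
      have "(2::int)^e = 2^eq * 2^(e-eq)" using assms(4) False by (simp add: power_add[symmetric])
      then have "2^eq * 2^(e-eq) dvd 2^eq * (Q'*a)" using H by (simp add: mult.assoc)
      then have "2^(e-eq) dvd Q'*a" by simp
      then show ?thesis using odd_cancel assms(2) m by blast
    qed
    moreover have "2^(e+1) dvd 2*s" using H dvd2 by blast
    ultimately show "2^(e+1) dvd ((2^ep*P')*(2^eq*Q')*a + 2*s) \<and> 2^(e-m) dvd a"
      using K by simp
  next
    assume H: "2^(e+1) dvd ((2^ep*P')*(2^eq*Q')*a + 2*s) \<and> 2^(e-m) dvd a"
    then obtain w where w: "a = 2^(e-m) * w" by blast
    have "2^(e+1) dvd (2^ep*P')*(2^eq*Q')*a" using K H by blast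
    then have "2^(e+1) dvd 2*s" using H by (metis dvd_add_right_iff)
    then have "2^e dvd s" using dvd2 by blast
    moreover have "2^e dvd (2^ep*P')*a"
    proof -
      have "(2^ep*P')*a = 2^(ep+(e-m)) * (P'*w)" unfolding w by (simp add: power_add algebra_simps)
      moreover have "(2::int)^e dvd 2^(ep+(e-m))"
        by (rule le_imp_power_dvd) (auto simp: m_def)
      ultimately show ?thesis by (metis dvd_mult2)
    qed
    moreover have "2^e dvd (2^eq*Q')*a"
    proof -
      have "(2^eq*Q')*a = 2^(eq+(e-m)) * (Q'*w)" unfolding w by (simp add: power_add algebra_simps)
      moreover have "(2::int)^e dvd 2^(eq+(e-m))"
        by (rule le_imp_power_dvd) (auto simp: m_def)
      ultimately show ?thesis by (metis dvd_mult2)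
    qed
    ultimately show "2^e dvd s \<and> 2^e dvd (2^ep*P')*a \<and> 2^e dvd (2^eq*Q')*a" by simp
  qed
qed

lemma core3:
  fixes a s P' Q' :: int and e ep eq :: nat
  assumes "e \<le> ep" "e \<le> eq" "0 < e"
  shows "((2::int)^e dvd s \<and> 2^e dvd (2^ep*P')*a \<and> 2^e dvd (2^eq*Q')*a) \<longleftrightarrow>
         (2^(e+1) dvd ((2^ep*P')*(2^eq*Q')*a + 2*s))"
proof -
  have "(2::int)^e dvd 2^ep" "(2::int)^e dvd 2^eq" using assms by (simp_all add: le_imp_power_dvd)
  then have 1: "2^e dvd (2^ep*P')*a" "2^e dvd (2^eq*Q')*a" by simp_all
  have "(2^ep*P')*(2^eq*Q')*a = 2^(ep+eq) * (P'*Q'*a)" by (simp add: power_add algebra_simps)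
  moreover have "(2::int)^(e+1) dvd 2^(ep+eq)" by (rule le_imp_power_dvd) (use assms in simp)
  ultimately have "2^(e+1) dvd (2^ep*P')*(2^eq*Q')*a" by (metis dvd_mult2)
  then show ?thesis using 1 dvd2[of e s] by (simp add: dvd_add_right_iff)
qed


lemma fixes_iff:
  assumes a: "a = hs (int p * int q + 2) (Suc k)" and b: "b = hs (int p * int q + 2) k"
  shows "cat_fixes p q e (Suc k) \<longleftrightarrow>
     ((2::int)^e dvd (a-b-1) \<and> 2^e dvd int p*a \<and> 2^e dvd int q*a)"
proof
  assume H: "cat_fixes p q e (Suc k)"
  have 1: "[fst ((cat_mat p q ^^ Suc k) (1, 0)) = 1] (mod 2 ^ e)"
    "[snd ((cat_mat p q ^^ Suc k) (1, 0)) = 0] (mod 2 ^ e)"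
    "[fst ((cat_mat p q ^^ Suc k) (0, 1)) = 0] (mod 2 ^ e)"
    using H unfolding cat_fixes_def by blast+
  then show "2^e dvd (a-b-1) \<and> 2^e dvd int p*a \<and> 2^e dvd int q*a"
    unfolding mat_pow a[symmetric] b[symmetric] cong_iff_dvd_diff by simp
next
  assume H: "2^e dvd (a-b-1) \<and> 2^e dvd int p*a \<and> 2^e dvd int q*a"
  show "cat_fixes p q e (Suc k)" unfolding cat_fixes_def
  proof (intro allI conjI)
    fix x y :: int
    have "(a - b) * x + int p * a * y - x = (a-b-1)*x + (int p*a)*y" by (simp add: algebra_simps)
    moreover have "2^e dvd (a-b-1)*x + (int p*a)*y" using H by simp
    ultimately show "[fst ((cat_mat p q ^^ Suc k) (x, y)) = x] (mod 2 ^ e)"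
      unfolding mat_pow a[symmetric] b[symmetric] cong_iff_dvd_diff fst_conv by metis
    have "int q * a * x + ((1 + int p * int q) * a - b) * y - y
        = (int q*a)*x + (a-b-1)*y + (int q*a)*(int p*y)" by (simp add: algebra_simps)
    moreover have "2^e dvd (int q*a)*x + (a-b-1)*y + (int q*a)*(int p*y)" using H by simp
    ultimately show "[snd ((cat_mat p q ^^ Suc k) (x, y)) = y] (mod 2 ^ e)"
      unfolding mat_pow a[symmetric] b[symmetric] cong_iff_dvd_diff snd_conv by metis
  qed
qed

lemma cond_iff:
  assumes "0 < p" "0 < q"
  assumes a: "a = hs (int p * int q + 2) (Suc n)" and b: "b = hs (int p * int q + 2) n"
  shows "cat_cond p q e (Suc n) \<longleftrightarrow>
     ((2::int)^(e+1) dvd (int p * int q * a + 2*(a-b-1)) \<and>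
      2 ^ nat (int e - cat_h p q e) dvd a)"
proof -
  define A where "A = int p * int q + 2"
  have G: "catG p q (Suc n) = real_of_int (A*a - 2*b)"
    unfolding catG_hs[OF assms(1,2)] A_def[symmetric] a[folded A_def] b[folded A_def]
    by (simp add: algebra_simps)
  have H: "catH p q (Suc n) = real_of_int a"
    unfolding catH_hs[OF assms(1,2)] a ..
  have c1: "(\<exists>k::int. catG p q (Suc n) / 2 = real_of_int (1 + 2 ^ e * k)) \<longleftrightarrow>
       (2::int)^(e+1) dvd (int p * int q * a + 2*(a-b-1))"
  proof -
    have "catG p q (Suc n) / 2 = real_of_int (1 + 2 ^ e * j) \<longleftrightarrow>
          int p * int q * a + 2*(a-b-1) = 2^(e+1) * j" for j :: int
    proof -
      have "catG p q (Suc n) / 2 = real_of_int (1 + 2 ^ e * j) \<longleftrightarrow>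
            real_of_int (A*a - 2*b) = real_of_int (2*(1 + 2 ^ e * j))"
        unfolding G by (simp add: field_simps)
      also have "\<dots> \<longleftrightarrow> A*a - 2*b = 2*(1 + 2 ^ e * j)" by (rule of_int_eq_iff)
      also have "\<dots> \<longleftrightarrow> int p * int q * a + 2*(a-b-1) = 2^(e+1) * j"
        unfolding A_def by (auto simp: algebra_simps)
      finally show ?thesis .
    qed
    then show ?thesis unfolding dvd_def by (auto simp: mult.commute)
  qed
  have c2: "(\<exists>k::int. catH p q (Suc n) = real_of_int (2 ^ nat (int e - cat_h p q e) * k)) \<longleftrightarrow>
       2 ^ nat (int e - cat_h p q e) dvd a"
    unfolding H of_int_eq_iff dvd_def by blast
  show ?thesis unfolding cat_cond_def c1 c2 ..
qed


lemma decomp: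
  assumes "0 < (p::nat)"
  shows "\<exists>p'. int p = 2^(multiplicity (2::nat) p) * int p' \<and> odd (int p')"
proof -
  obtain p' where p': "p = 2^(multiplicity (2::nat) p) * p'" using multiplicity_dvd by blast
  have "odd p'"
  proof
    assume "even p'"
    then obtain r where "p' = 2*r" by blast
    then have "(2::nat)^(Suc (multiplicity 2 p)) dvd p" using p' by (metis dvd_triv_left mult.assoc power_Suc2)
    then have "Suc (multiplicity 2 p) \<le> multiplicity (2::nat) p"
      using assms by (intro multiplicity_geI) auto
    then show False by simp
  qed
  then show ?thesis using p' by (intro exI[of _ p']) (metis of_nat_mult of_nat_numeral of_nat_power even_of_nat)
qed


lemma key:
  assumes "0 < p" "0 < q" "0 < e"
  shows "cat_fixes p q e (Suc k) \<longleftrightarrow> cat_cond p q e (Suc k)"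
proof -
  define a where "a = hs (int p * int q + 2) (Suc k)"
  define b where "b = hs (int p * int q + 2) k"
  define ep where "ep = multiplicity (2::nat) p"
  define eq where "eq = multiplicity (2::nat) q"
  obtain p' where p': "int p = 2^ep * int p'" "odd (int p')" using decomp[OF assms(1)] ep_def by blast
  obtain q' where q': "int q = 2^eq * int q'" "odd (int q')" using decomp[OF assms(2)] eq_def by blast
  have cas0: "(a - b)^2 - (int p * int q + 2 - 2) * a * b = 1"
    unfolding a_def b_def by (rule hs_cassini)
  have F: "cat_fixes p q e (Suc k) \<longleftrightarrow>
     ((2::int)^e dvd (a-b-1) \<and> 2^e dvd int p*a \<and> 2^e dvd int q*a)"
    by (rule fixes_iff) (simp_all add: a_def b_def)
  have C: "cat_cond p q e (Suc k) \<longleftrightarrow>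
     ((2::int)^(e+1) dvd (int p * int q * a + 2*(a-b-1)) \<and>
      2 ^ nat (int e - cat_h p q e) dvd a)"
    by (rule cond_iff) (simp_all add: assms a_def b_def)
  have h: "cat_h p q e = (if ep + eq = 0 then -1 else if e > min ep eq then int (min ep eq) else int e)"
    unfolding cat_h_def ep_def eq_def Let_def ..
  show ?thesis
  proof (cases "ep + eq = 0")
    case True
    then have "ep = 0" "eq = 0" by auto
    then have pq: "int p = int p'" "int q = int q'" using p' q' by auto
    have N: "nat (int e - cat_h p q e) = e + 1" using True h by simp
    have cas: "(a - b)^2 - int p' * int q' * a * b = 1" using cas0 pq by simp
    show ?thesis unfolding F C N pq using core1[OF p'(2) q'(2) assms(3) cas] by simp
  next
    case False
    note F' = F[unfolded p'(1) q'(1)]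
    note C' = C[unfolded p'(1) q'(1)]
    show ?thesis
    proof (cases "e > min ep eq")
      case True
      have "cat_h p q e = int (min ep eq)" using True False h by simp
      then have N: "nat (int e - cat_h p q e) = e - min ep eq" by (simp add: nat_minus_as_int)
      show ?thesis unfolding F' C' N
        using core2[OF p'(2) q'(2) _ True, where a=a and s="a-b-1"] False by simp
    next
      case F2: False
      have N: "nat (int e - cat_h p q e) = 0" using F2 False h by simp
      have le: "e \<le> ep" "e \<le> eq" using F2 by auto
      show ?thesis unfolding F' C' N
        using core3[OF le assms(3), where a=a and s="a-b-1" and P'="int p'" and Q'="int q'"] by simp
    qed
  qed
qed

theorem proposition3:
  fixes p q e T :: nat
  assumes "0 < p" and "0 < q" and "0 < e"
  shows "cat_least_period p q e T \<longleftrightarrow>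
           (0 < T \<and> cat_cond p q e T \<and> (\<forall>n. 0 < n \<and> n < T \<longrightarrow> \<not> cat_cond p q e n))"
proof -
  have E: "cat_fixes p q e n \<longleftrightarrow> cat_cond p q e n" if "0 < n" for n
  proof -
    obtain k where "n = Suc k" using \<open>0 < n\<close> gr0_implies_Suc by blast
    then show ?thesis using key[OF assms] by simp
  qed
  show ?thesis unfolding cat_least_period_def using E by blast
qed

end
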